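(* Consider a generalized Nash equilibrium problem (GNEP) with $N$ players in which player $\nu$ solves $\min_{x^\nu}\theta_\nu(x)$ subject to $c^\nu(x)\le 0$, where $\theta_\nu:\mathbb{R}^n\to\mathbb{R}$ and $c^\nu:\mathbb{R}^n\to\mathbb{R}^{r_\nu}$ are continuously differentiable. Let $(x^k)\subset\mathbb{R}^n$ be a sequence converging to $\bar x$ and, for each $\nu$, let $(\lambda^{\nu,k})\subset\mathbb{R}^{r_\nu}$ be vectors with $$\nabla_{x^\nu}\theta_\nu(x^k)+\nabla_{x^\nu}c^\nu(x^k)\lambda^{\nu,k}\to 0\quad\text{and}\quad \min\{-c^\nu(x^k),\lambda^{\nu,k}\}\to0$$ for every $\nu$. If GNEP-CPLD holds in $\bar x$, then there is a multiplier $\bar\lambda$ such that $(\bar x,\bar\lambda)$ is a KKT point of the GNEP.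
   Context: Variables: $x=(x^1,\ldots,x^N)\in\mathbb{R}^n$, $x^\nu\in\mathbb{R}^{n_\nu}$, $r=r_1+\cdots+r_N$; $\nabla f$ is the transposed Jacobian and $\nabla_{x^\nu}f$ its submatrix for the components $x^\nu$; $\min$ of vectors is componentwise. A pair $(x,\lambda)\in\mathbb{R}^{n+r}$, $\lambda=(\lambda^1,\ldots,\lambda^N)$, $\lambda^\nu\in\mathbb{R}^{r_\nu}$, is a KKT point of the GNEP if for every $\nu$: $\nabla_{x^\nu}\theta_\nu(x)+\nabla_{x^\nu}c^\nu(x)\lambda^\nu=0$ and $\min\{-c^\nu(x),\lambda^\nu\}=0$. Vectors $v_1,\dots,v_k$ are positively linearly dependent if $\sum_i\lambda_iv_i=0$ has a nontrivial solution with all $\lambda_i\ge0$. CPLD$_\nu$ at a point $x$ with $c^\nu(x)\le0$: whenever $\nabla_{x^\nu}c_i^\nu(x)$, $i\in I$, are positively linearly dependent for some $I\subset\{i:c_i^\nu(x)=0\}$, the partial gradients $\nabla_{x^\nu}c_i^\nu(y)$, $i\in I$, are linearly dependent for all $y$ in a neighbourhood of $x$. GNEP-CPLD holds at $x$ if $c^\nu(x)\le 0$ and CPLD$_\nu$ holds at $x$ for every $\nu$. *)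

theory Defs
  imports "HOL-Analysis.Analysis"
begin

text \<open>Setting: R^n is real^'n; the coordinates are partitioned into player blocks by
  blk :: 'n => 'p (coordinate j belongs to x^nu iff blk j = nu). Player nu has r nu
  constraints c nu i, i < r nu. Partial gradients w.r.t. x^nu are represented as vectors
  in real^'n that vanish outside the block of nu.\<close>

definition partial :: "'n::finite \<Rightarrow> (real^'n \<Rightarrow> real) \<Rightarrow> real^'n \<Rightarrow> real" where
  "partial j f x = frechet_derivative f (at x) (axis j 1)"

definition grad :: "(real^'n::finite \<Rightarrow> real) \<Rightarrow> real^'n \<Rightarrow> real^'n" where
  "grad f x = (\<chi> j. partial j f x)"

definition C1 :: "(real^'n::finite \<Rightarrow> real) \<Rightarrow> bool" where
  "C1 f \<longleftrightarrow> (\<forall>x. f differentiable (at x)) \<and> continuous_on UNIV (grad f)"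

definition pgrad :: "('n::finite \<Rightarrow> 'p) \<Rightarrow> 'p \<Rightarrow> (real^'n \<Rightarrow> real) \<Rightarrow> real^'n \<Rightarrow> real^'n" where
  "pgrad blk \<nu> f x = (\<chi> j. if blk j = \<nu> then partial j f x else 0)"

definition pos_lin_dep :: "nat set \<Rightarrow> (nat \<Rightarrow> real^'n::finite) \<Rightarrow> bool" where
  "pos_lin_dep I v \<longleftrightarrow> (\<exists>\<mu>. (\<forall>i\<in>I. \<mu> i \<ge> 0) \<and> (\<exists>i\<in>I. \<mu> i \<noteq> 0) \<and> (\<Sum>i\<in>I. \<mu> i *\<^sub>R v i) = 0)"

definition lin_dep_fam :: "nat set \<Rightarrow> (nat \<Rightarrow> real^'n::finite) \<Rightarrow> bool" where
  "lin_dep_fam I v \<longleftrightarrow> (\<exists>\<mu>. (\<exists>i\<in>I. \<mu> i \<noteq> 0) \<and> (\<Sum>i\<in>I. \<mu> i *\<^sub>R v i) = 0)"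

definition CPLD_player ::
  "('n::finite \<Rightarrow> 'p) \<Rightarrow> ('p \<Rightarrow> nat) \<Rightarrow> ('p \<Rightarrow> nat \<Rightarrow> real^'n \<Rightarrow> real) \<Rightarrow> 'p \<Rightarrow> real^'n \<Rightarrow> bool" where
  "CPLD_player blk r c \<nu> x \<longleftrightarrow>
     (\<forall>I. I \<subseteq> {i. i < r \<nu> \<and> c \<nu> i x = 0} \<longrightarrow>
        pos_lin_dep I (\<lambda>i. pgrad blk \<nu> (c \<nu> i) x) \<longrightarrow>
        (\<exists>U. open U \<and> x \<in> U \<and> (\<forall>y\<in>U. lin_dep_fam I (\<lambda>i. pgrad blk \<nu> (c \<nu> i) y))))"

definition GNEP_CPLD ::
  "('n::finite \<Rightarrow> 'p::finite) \<Rightarrow> ('p \<Rightarrow> nat) \<Rightarrow> ('p \<Rightarrow> nat \<Rightarrow> real^'n \<Rightarrow> real) \<Rightarrow> real^'n \<Rightarrow> bool" where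
  "GNEP_CPLD blk r c x \<longleftrightarrow>
     (\<forall>\<nu>. (\<forall>i<r \<nu>. c \<nu> i x \<le> 0) \<and> CPLD_player blk r c \<nu> x)"

definition is_KKT ::
  "('n::finite \<Rightarrow> 'p::finite) \<Rightarrow> ('p \<Rightarrow> real^'n \<Rightarrow> real) \<Rightarrow> ('p \<Rightarrow> nat) \<Rightarrow>
   ('p \<Rightarrow> nat \<Rightarrow> real^'n \<Rightarrow> real) \<Rightarrow> real^'n \<Rightarrow> ('p \<Rightarrow> nat \<Rightarrow> real) \<Rightarrow> bool" where
  "is_KKT blk \<theta> r c x lm \<longleftrightarrow>
     (\<forall>\<nu>. pgrad blk \<nu> (\<theta> \<nu>) x + (\<Sum>i<r \<nu>. lm \<nu> i *\<^sub>R pgrad blk \<nu> (c \<nu> i) x) = 0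
         \<and> (\<forall>i<r \<nu>. min (- c \<nu> i x) (lm \<nu> i) = 0))"

end

theory Submission
  imports Defs
begin
lemma cara:
  fixes w :: "nat \<Rightarrow> real^'n::finite"
  assumes "finite S" "\<forall>i\<in>S. a i \<ge> 0"
  shows "\<exists>J \<beta>. J \<subseteq> S \<and> (\<forall>i\<in>J. \<beta> i \<ge> 0) \<and> (\<Sum>i\<in>S. a i *\<^sub>R w i) = (\<Sum>i\<in>J. \<beta> i *\<^sub>R w i)
     \<and> \<not> lin_dep_fam J w"
  using assms
proof (induction S arbitrary: a rule: finite_psubset_induct)
  case (psubset S)
  show ?case
  proof (cases "lin_dep_fam S w")
    case False
    then show ?thesis using psubset.prems by blast
  next
    case True
    then obtain \<nu> where nz: "\<exists>i\<in>S. \<nu> i \<noteq> 0" and s0: "(\<Sum>i\<in>S. \<nu> i *\<^sub>R w i) = 0"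
      unfolding lin_dep_fam_def by blast
    define \<nu>' where "\<nu>' = (if \<exists>i\<in>S. \<nu> i > 0 then \<nu> else (\<lambda>i. - \<nu> i))"
    have pos: "\<exists>i\<in>S. \<nu>' i > 0"
    proof (cases "\<exists>i\<in>S. \<nu> i > 0")
      case True then show ?thesis by (simp add: \<nu>'_def)
    next
      case False
      then obtain i where "i\<in>S" "\<nu> i < 0" using nz by force
      then show ?thesis using False by (auto simp: \<nu>'_def)
    qed
    have s0': "(\<Sum>i\<in>S. \<nu>' i *\<^sub>R w i) = 0"
      using s0 by (simp add: \<nu>'_def sum_negf)
    define P where "P = {i\<in>S. \<nu>' i > 0}"
    have finP: "finite P" "P \<noteq> {}" using psubset.hyps pos by (auto simp: P_def)
    define t where "t = Min ((\<lambda>i. a i / \<nu>' i) ` P)"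
    have "t \<in> (\<lambda>i. a i / \<nu>' i) ` P"
      unfolding t_def using finP by (intro Min_in) auto
    then obtain i1 where i1: "i1 \<in> P" "t = a i1 / \<nu>' i1" by blast
    have tle: "\<And>i. i \<in> P \<Longrightarrow> t \<le> a i / \<nu>' i" unfolding t_def using finP by auto
    have t0: "t \<ge> 0" using i1 psubset.prems by (auto simp: P_def)
    define a' where "a' i = a i - t * \<nu>' i" for i
    have a'0: "\<forall>i\<in>S - {i1}. a' i \<ge> 0"
    proof
      fix i assume i: "i \<in> S - {i1}"
      show "a' i \<ge> 0"
      proof (cases "\<nu>' i > 0")
        case True
        then have "t \<le> a i / \<nu>' i" using tle i by (auto simp: P_def)
        then have "t * \<nu>' i \<le> a i" using True by (simp add: pos_le_divide_eq)
        then show ?thesis by (simp add: a'_def)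
      next
        case False
        then have "t * \<nu>' i \<le> 0" using t0 by (simp add: mult_nonneg_nonpos)
        moreover have "a i \<ge> 0" using psubset.prems i by auto
        ultimately show ?thesis by (simp add: a'_def)
      qed
    qed
    have a'i1: "a' i1 = 0" using i1 by (auto simp: a'_def P_def)
    have "(\<Sum>i\<in>S. a' i *\<^sub>R w i) = (\<Sum>i\<in>S. a i *\<^sub>R w i) - t *\<^sub>R (\<Sum>i\<in>S. \<nu>' i *\<^sub>R w i)"
      by (simp add: a'_def scaleR_diff_left sum_subtractf scaleR_sum_right)
    then have eq1: "(\<Sum>i\<in>S. a i *\<^sub>R w i) = (\<Sum>i\<in>S. a' i *\<^sub>R w i)" using s0' by simp
    have i1S: "i1 \<in> S" using i1 by (auto simp: P_def)
    have eq2: "(\<Sum>i\<in>S. a' i *\<^sub>R w i) = (\<Sum>i\<in>S - {i1}. a' i *\<^sub>R w i)"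
      using sum.remove[OF psubset.hyps(1) i1S, of "\<lambda>i. a' i *\<^sub>R w i"] a'i1 by simp
    have "S - {i1} \<subset> S" using i1S by auto
    from psubset.IH[OF this a'0] obtain J \<beta> where
      "J \<subseteq> S - {i1}" "\<forall>i\<in>J. \<beta> i \<ge> 0" "(\<Sum>i\<in>S - {i1}. a' i *\<^sub>R w i) = (\<Sum>i\<in>J. \<beta> i *\<^sub>R w i)"
      "\<not> lin_dep_fam J w" by blast
    then show ?thesis using eq1 eq2 by (metis Diff_subset subset_trans)
  qed
qed

lemma subseq_extr:
  fixes f :: "nat \<Rightarrow> nat \<Rightarrow> real"
  assumes "finite I" "\<forall>n. \<forall>i\<in>I. f n i \<in> {0..1}"
  shows "\<exists>\<sigma>. strict_mono \<sigma> \<and> (\<forall>i\<in>I. \<exists>l\<in>{0..1}. (\<lambda>n. f (\<sigma> n) i) \<longlonglongrightarrow> l)"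
  using assms
proof (induction I arbitrary: f rule: finite_induct)
  case empty
  show ?case by (rule exI[of _ "\<lambda>n. n"]) (auto simp: strict_mono_def)
next
  case (insert x F)
  obtain \<sigma> where \<sigma>: "strict_mono \<sigma>" "\<forall>i\<in>F. \<exists>l\<in>{0..1}. (\<lambda>n. f (\<sigma> n) i) \<longlonglongrightarrow> l"
    using insert.IH[of f] insert.prems by blast
  have "\<forall>n. f (\<sigma> n) x \<in> {0..1}" using insert.prems by auto
  then obtain l r where lr: "l \<in> {0..1}" "strict_mono r" "((\<lambda>n. f (\<sigma> n) x) \<circ> r) \<longlonglongrightarrow> l"
    using seq_compactE[OF compact_imp_seq_compact[OF compact_Icc]] by metis
  have "strict_mono (\<sigma> \<circ> r)" using \<sigma>(1) lr(2) by (rule strict_mono_o)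
  moreover have "\<forall>i\<in>insert x F. \<exists>l\<in>{0..1}. (\<lambda>n. f ((\<sigma> \<circ> r) n) i) \<longlonglongrightarrow> l"
  proof
    fix i assume "i \<in> insert x F"
    then show "\<exists>l\<in>{0..1}. (\<lambda>n. f ((\<sigma> \<circ> r) n) i) \<longlonglongrightarrow> l"
    proof
      assume "i = x" then show ?thesis using lr by (auto simp: o_def)
    next
      assume "i \<in> F"
      then obtain l' where "l' \<in> {0..1}" "(\<lambda>n. f (\<sigma> n) i) \<longlonglongrightarrow> l'" using \<sigma> by blast
      then show ?thesis using LIMSEQ_subseq_LIMSEQ[OF _ lr(2)] unfolding o_def by blast
    qed
  qed
  ultimately show ?case by blast
qed

lemma player:
  fixes g :: "'x::metric_space \<Rightarrow> real^'n::finite" and v :: "nat \<Rightarrow> 'x \<Rightarrow> real^'n"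
    and h :: "nat \<Rightarrow> 'x \<Rightarrow> real" and xs :: "nat \<Rightarrow> 'x" and lam :: "nat \<Rightarrow> nat \<Rightarrow> real"
  assumes xs: "xs \<longlonglongrightarrow> xbar"
    and g: "(\<lambda>k. g (xs k)) \<longlonglongrightarrow> g xbar"
    and v: "\<And>i. i < m \<Longrightarrow> (\<lambda>k. v i (xs k)) \<longlonglongrightarrow> v i xbar"
    and h: "\<And>i. i < m \<Longrightarrow> (\<lambda>k. h i (xs k)) \<longlonglongrightarrow> h i xbar"
    and hle: "\<And>i. i < m \<Longrightarrow> h i xbar \<le> 0"
    and stat: "(\<lambda>k. g (xs k) + (\<Sum>i<m. lam k i *\<^sub>R v i (xs k))) \<longlonglongrightarrow> 0"
    and compl: "\<And>i. i < m \<Longrightarrow> (\<lambda>k. min (- h i (xs k)) (lam k i)) \<longlonglongrightarrow> 0"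
    and cpld: "\<forall>I. I \<subseteq> {i. i < m \<and> h i xbar = 0} \<longrightarrow> pos_lin_dep I (\<lambda>i. v i xbar) \<longrightarrow>
                 (\<exists>U. open U \<and> xbar \<in> U \<and> (\<forall>y\<in>U. lin_dep_fam I (\<lambda>i. v i y)))"
  shows "\<exists>l. g xbar + (\<Sum>i<m. l i *\<^sub>R v i xbar) = 0 \<and> (\<forall>i<m. min (- h i xbar) (l i) = 0)"
proof -
  define A where "A = {i. i < m \<and> h i xbar = 0}"
  have finA: "finite A" and Am: "A \<subseteq> {..<m}" by (auto simp: A_def)
  define \<mu> where "\<mu> k i = (if i \<in> A then max (lam k i) 0 else 0)" for k i
  have coef: "(\<lambda>k. lam k i - \<mu> k i) \<longlonglongrightarrow> 0" if i: "i < m" for i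
  proof (cases "i \<in> A")
    case True
    then have h0: "h i xbar = 0" by (simp add: A_def)
    have e: "(\<lambda>k. lam k i - \<mu> k i) = (\<lambda>k. min (lam k i) 0)"
      by (rule ext) (simp add: \<mu>_def True min_def max_def)
    have "(\<lambda>k. \<bar>min (- h i (xs k)) (lam k i)\<bar> + \<bar>h i (xs k)\<bar>) \<longlonglongrightarrow> 0"
      using tendsto_add_zero[OF tendsto_rabs_zero[OF compl[OF i]] tendsto_rabs_zero[of "\<lambda>k. h i (xs k)"]]
        h[OF i] h0 by simp
    moreover have "\<forall>\<^sub>F k in sequentially. norm (min (lam k i) 0) \<le> \<bar>min (- h i (xs k)) (lam k i)\<bar> + \<bar>h i (xs k)\<bar>"
      by (intro always_eventually allI) (simp add: min_def abs_if)
    ultimately show ?thesis unfolding e by (rule Lim_null_comparison[rotated])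
  next
    case False
    then have hlt: "h i xbar < 0" using hle[OF i] i by (force simp: A_def)
    have e1: "\<forall>\<^sub>F k in sequentially. - h i xbar / 2 < - h i (xs k)"
      using order_tendstoD(1)[OF tendsto_minus[OF h[OF i]], of "- h i xbar / 2"] hlt by simp
    have e2: "\<forall>\<^sub>F k in sequentially. min (- h i (xs k)) (lam k i) < - h i xbar / 2"
      using order_tendstoD(2)[OF compl[OF i], of "- h i xbar / 2"] hlt by simp
    have "\<forall>\<^sub>F k in sequentially. min (- h i (xs k)) (lam k i) = lam k i - \<mu> k i"
      using eventually_conj[OF e1 e2] by eventually_elim (auto simp: \<mu>_def False min_def)
    from tendsto_cong[OF this] show ?thesis using compl[OF i] by simp
  qed
  have "(\<lambda>k. \<Sum>i<m. (lam k i - \<mu> k i) *\<^sub>R v i (xs k)) \<longlonglongrightarrow> (\<Sum>i<m. 0 *\<^sub>R v i xbar)"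
    by (intro tendsto_sum tendsto_scaleR coef v) auto
  then have d0: "(\<lambda>k. \<Sum>i<m. (lam k i - \<mu> k i) *\<^sub>R v i (xs k)) \<longlonglongrightarrow> 0" by simp
  have "(\<lambda>k. (g (xs k) + (\<Sum>i<m. lam k i *\<^sub>R v i (xs k))) - (\<Sum>i<m. (lam k i - \<mu> k i) *\<^sub>R v i (xs k))) \<longlonglongrightarrow> 0 - 0"
    by (intro tendsto_diff stat d0)
  moreover have "(g (xs k) + (\<Sum>i<m. lam k i *\<^sub>R v i (xs k))) - (\<Sum>i<m. (lam k i - \<mu> k i) *\<^sub>R v i (xs k))
      = g (xs k) + (\<Sum>i\<in>A. \<mu> k i *\<^sub>R v i (xs k))" for k
  proof -
    have "(\<Sum>i<m. \<mu> k i *\<^sub>R v i (xs k)) = (\<Sum>i\<in>A. \<mu> k i *\<^sub>R v i (xs k))"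
      by (rule sum.mono_neutral_right) (use Am in \<open>auto simp: \<mu>_def\<close>)
    then show ?thesis by (simp add: scaleR_diff_left sum_subtractf)
  qed
  ultimately have stat2: "(\<lambda>k. g (xs k) + (\<Sum>i\<in>A. \<mu> k i *\<^sub>R v i (xs k))) \<longlonglongrightarrow> 0" by simp
  have ex: "\<forall>k. \<exists>J \<beta>. J \<subseteq> A \<and> (\<forall>i\<in>J. \<beta> i \<ge> 0) \<and> (\<Sum>i\<in>A. \<mu> k i *\<^sub>R v i (xs k)) = (\<Sum>i\<in>J. \<beta> i *\<^sub>R v i (xs k))
     \<and> \<not> lin_dep_fam J (\<lambda>i. v i (xs k))"
  proof
    fix k
    show "\<exists>J \<beta>. J \<subseteq> A \<and> (\<forall>i\<in>J. \<beta> i \<ge> 0) \<and> (\<Sum>i\<in>A. \<mu> k i *\<^sub>R v i (xs k)) = (\<Sum>i\<in>J. \<beta> i *\<^sub>R v i (xs k))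
     \<and> \<not> lin_dep_fam J (\<lambda>i. v i (xs k))"
      by (rule cara[OF finA]) (simp add: \<mu>_def)
  qed
  from choice[OF ex] obtain JJ where "\<forall>k. \<exists>\<beta>. JJ k \<subseteq> A \<and> (\<forall>i\<in>JJ k. \<beta> i \<ge> 0) \<and> (\<Sum>i\<in>A. \<mu> k i *\<^sub>R v i (xs k)) = (\<Sum>i\<in>JJ k. \<beta> i *\<^sub>R v i (xs k))
     \<and> \<not> lin_dep_fam (JJ k) (\<lambda>i. v i (xs k))"
    by blast
  from choice[OF this] obtain \<beta>\<beta> where "\<forall>k. JJ k \<subseteq> A \<and> (\<forall>i\<in>JJ k. \<beta>\<beta> k i \<ge> 0) \<and> (\<Sum>i\<in>A. \<mu> k i *\<^sub>R v i (xs k)) = (\<Sum>i\<in>JJ k. \<beta>\<beta> k i *\<^sub>R v i (xs k))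
     \<and> \<not> lin_dep_fam (JJ k) (\<lambda>i. v i (xs k))"
    by blast
  then have JB: "\<And>k. JJ k \<subseteq> A" "\<And>k. \<forall>i\<in>JJ k. \<beta>\<beta> k i \<ge> 0"
    "\<And>k. (\<Sum>i\<in>A. \<mu> k i *\<^sub>R v i (xs k)) = (\<Sum>i\<in>JJ k. \<beta>\<beta> k i *\<^sub>R v i (xs k))"
    "\<And>k. \<not> lin_dep_fam (JJ k) (\<lambda>i. v i (xs k))"
    by auto
  have "range JJ \<subseteq> Pow A" using JB(1) by auto
  then have "finite (range JJ)" using finA by (simp add: finite_subset)
  then obtain J where "infinite (JJ -` {J})" using inf_img_fin_domE[of JJ UNIV] by auto
  then obtain \<sigma>1 :: "nat \<Rightarrow> nat" where \<sigma>1: "strict_mono \<sigma>1" "\<And>n. JJ (\<sigma>1 n) = J"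
    using infinite_enumerate by blast
  have JA: "J \<subseteq> A" using JB(1)[of "\<sigma>1 0"] \<sigma>1(2)[of 0] by simp
  then have finJ: "finite J" using finA finite_subset by blast
  have mJ: "m \<notin> J" using JA Am by auto
  define M where "M n = 1 + (\<Sum>i\<in>J. \<beta>\<beta> (\<sigma>1 n) i)" for n
  have M1: "M n \<ge> 1" for n using JB(2)[of "\<sigma>1 n"] \<sigma>1(2) by (auto simp: M_def intro: sum_nonneg)
  define F where "F n i = (if i = m then 1 / M n else \<beta>\<beta> (\<sigma>1 n) i / M n)" for n i
  have F01: "\<forall>n. \<forall>i\<in>insert m J. F n i \<in> {0..1}"
  proof (intro allI ballI)
    fix n i assume i: "i \<in> insert m J"
    show "F n i \<in> {0..1}"
    proof (cases "i = m")
      case True then show ?thesis using M1[of n] by (simp add: F_def)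
    next
      case False
      then have iJ: "i \<in> J" using i by auto
      have b0: "\<beta>\<beta> (\<sigma>1 n) i \<ge> 0" using JB(2)[of "\<sigma>1 n"] \<sigma>1(2) iJ by auto
      have "\<beta>\<beta> (\<sigma>1 n) i \<le> (\<Sum>i\<in>J. \<beta>\<beta> (\<sigma>1 n) i)"
        using JB(2)[of "\<sigma>1 n"] \<sigma>1(2) iJ finJ by (intro member_le_sum) auto
      then have "\<beta>\<beta> (\<sigma>1 n) i \<le> M n" by (simp add: M_def)
      then show ?thesis using b0 M1[of n] False by (simp add: F_def divide_le_eq_1)
    qed
  qed
  obtain \<sigma>2 where \<sigma>2: "strict_mono \<sigma>2" "\<forall>i\<in>insert m J. \<exists>l\<in>{0..1}. (\<lambda>n. F (\<sigma>2 n) i) \<longlonglongrightarrow> l"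
    using subseq_extr[OF _ F01] finJ by blast
  have "\<forall>i\<in>insert m J. \<exists>l. l \<in> {0..1} \<and> (\<lambda>n. F (\<sigma>2 n) i) \<longlonglongrightarrow> l"
    using \<sigma>2(2) by blast
  from bchoice[OF this] obtain L where L: "\<And>i. i \<in> insert m J \<Longrightarrow> L i \<in> {0..1} \<and> (\<lambda>n. F (\<sigma>2 n) i) \<longlonglongrightarrow> L i"
    by blast
  define \<rho> where "\<rho> = \<sigma>1 \<circ> \<sigma>2"
  have \<rho>: "strict_mono \<rho>" unfolding \<rho>_def using \<sigma>1(1) \<sigma>2(1) by (rule strict_mono_o)
  have xs\<rho>: "(\<lambda>n. xs (\<rho> n)) \<longlonglongrightarrow> xbar" using LIMSEQ_subseq_LIMSEQ[OF xs \<rho>] by (simp add: o_def)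
  define Q where "Q n = F (\<sigma>2 n) m *\<^sub>R g (xs (\<rho> n)) + (\<Sum>i\<in>J. F (\<sigma>2 n) i *\<^sub>R v i (xs (\<rho> n)))" for n
  have Qeq: "Q n = F (\<sigma>2 n) m *\<^sub>R (g (xs (\<rho> n)) + (\<Sum>i\<in>A. \<mu> (\<rho> n) i *\<^sub>R v i (xs (\<rho> n))))" for n
  proof -
    have "(\<Sum>i\<in>A. \<mu> (\<rho> n) i *\<^sub>R v i (xs (\<rho> n))) = (\<Sum>i\<in>J. \<beta>\<beta> (\<rho> n) i *\<^sub>R v i (xs (\<rho> n)))"
      using JB(3)[of "\<rho> n"] \<sigma>1(2)[of "\<sigma>2 n"] by (simp add: \<rho>_def)
    moreover have "(\<Sum>i\<in>J. F (\<sigma>2 n) i *\<^sub>R v i (xs (\<rho> n))) = F (\<sigma>2 n) m *\<^sub>R (\<Sum>i\<in>J. \<beta>\<beta> (\<rho> n) i *\<^sub>R v i (xs (\<rho> n)))"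
      unfolding scaleR_sum_right using mJ by (intro sum.cong refl) (auto simp: F_def \<rho>_def)
    ultimately show ?thesis by (simp add: Q_def scaleR_add_right)
  qed
  have "(\<lambda>n. F (\<sigma>2 n) m *\<^sub>R (g (xs (\<rho> n)) + (\<Sum>i\<in>A. \<mu> (\<rho> n) i *\<^sub>R v i (xs (\<rho> n))))) \<longlonglongrightarrow> L m *\<^sub>R 0"
    using L[of m] LIMSEQ_subseq_LIMSEQ[OF stat2 \<rho>] by (intro tendsto_scaleR) (auto simp: o_def)
  then have Q0: "Q \<longlonglongrightarrow> 0" unfolding Qeq[abs_def] by simp
  have vJ: "(\<lambda>n. v i (xs (\<rho> n))) \<longlonglongrightarrow> v i xbar" if "i \<in> J" for i
    using LIMSEQ_subseq_LIMSEQ[OF v \<rho>, of i] that JA Am by (auto simp: o_def)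
  have "Q \<longlonglongrightarrow> L m *\<^sub>R g xbar + (\<Sum>i\<in>J. L i *\<^sub>R v i xbar)"
    unfolding Q_def[abs_def] using L vJ LIMSEQ_subseq_LIMSEQ[OF g \<rho>]
    by (intro tendsto_add tendsto_scaleR tendsto_sum) (auto simp: o_def)
  with Q0 have E: "L m *\<^sub>R g xbar + (\<Sum>i\<in>J. L i *\<^sub>R v i xbar) = 0" using LIMSEQ_unique by blast
  have S1: "F n m + (\<Sum>i\<in>J. F n i) = 1" for n
  proof -
    have "(\<Sum>i\<in>J. F n i) = (\<Sum>i\<in>J. \<beta>\<beta> (\<sigma>1 n) i) / M n"
      unfolding sum_divide_distrib using mJ by (intro sum.cong refl) (auto simp: F_def)
    then show ?thesis using M1[of n] by (simp add: F_def M_def field_simps)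
  qed
  have "(\<lambda>n. F (\<sigma>2 n) m + (\<Sum>i\<in>J. F (\<sigma>2 n) i)) \<longlonglongrightarrow> L m + (\<Sum>i\<in>J. L i)"
    using L by (intro tendsto_add tendsto_sum) auto
  then have "(\<lambda>n. 1::real) \<longlonglongrightarrow> L m + (\<Sum>i\<in>J. L i)" by (simp add: S1)
  then have Lsum: "L m + (\<Sum>i\<in>J. L i) = 1" using LIMSEQ_unique[OF tendsto_const] by metis
  have L0: "L i \<ge> 0" if "i \<in> insert m J" for i using L[OF that] by simp
  show ?thesis
  proof (cases "L m = 0")
    case False
    then have Lm: "L m > 0" using L0[of m] by simp
    define l where "l i = (if i \<in> J then L i / L m else 0)" for i
    have "(\<Sum>i<m. l i *\<^sub>R v i xbar) = (\<Sum>i\<in>J. l i *\<^sub>R v i xbar)"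
      by (rule sum.mono_neutral_right) (use JA Am in \<open>auto simp: l_def\<close>)
    also have "\<dots> = (1 / L m) *\<^sub>R (\<Sum>i\<in>J. L i *\<^sub>R v i xbar)"
      unfolding scaleR_sum_right by (intro sum.cong refl) (auto simp: l_def)
    finally have "g xbar + (\<Sum>i<m. l i *\<^sub>R v i xbar) = (1 / L m) *\<^sub>R (L m *\<^sub>R g xbar + (\<Sum>i\<in>J. L i *\<^sub>R v i xbar))"
      using Lm by (simp add: scaleR_add_right)
    then have st: "g xbar + (\<Sum>i<m. l i *\<^sub>R v i xbar) = 0" using E by simp
    have "min (- h i xbar) (l i) = 0" if "i < m" for i
    proof (cases "i \<in> J")
      case True
      then have "h i xbar = 0" using JA by (auto simp: A_def)
      moreover have "l i \<ge> 0" using True L0[of i] Lm by (simp add: l_def)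
      ultimately show ?thesis by simp
    next
      case False
      then show ?thesis using hle[OF that] by (simp add: l_def)
    qed
    then show ?thesis using st by blast
  next
    case True
    then have "(\<Sum>i\<in>J. L i) = 1" using Lsum by simp
    have "\<exists>i\<in>J. L i \<noteq> 0"
    proof (rule ccontr)
      assume "\<not> ?thesis"
      then have "(\<Sum>i\<in>J. L i) = 0" by simp
      then show False using \<open>(\<Sum>i\<in>J. L i) = 1\<close> by simp
    qed
    then obtain i0 where i0: "i0 \<in> J" "L i0 \<noteq> 0" by blast
    have "pos_lin_dep J (\<lambda>i. v i xbar)"
      unfolding pos_lin_dep_def using E True L0 i0 by (intro exI[of _ L]) auto
    then obtain U where U: "open U" "xbar \<in> U" "\<forall>y\<in>U. lin_dep_fam J (\<lambda>i. v i y)"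
      using cpld JA unfolding A_def by blast
    have "\<forall>\<^sub>F n in sequentially. xs (\<rho> n) \<in> U" using topological_tendstoD[OF xs\<rho> U(1,2)] .
    then obtain n where "xs (\<rho> n) \<in> U" using eventually_sequentially by auto
    then have "lin_dep_fam J (\<lambda>i. v i (xs (\<rho> n)))" using U(3) by blast
    moreover have "\<not> lin_dep_fam J (\<lambda>i. v i (xs (\<rho> n)))"
      using JB(4)[of "\<rho> n"] \<sigma>1(2)[of "\<sigma>2 n"] by (simp add: \<rho>_def)
    ultimately show ?thesis by blast
  qed
qed

lemma seq_cont:
  assumes "continuous_on UNIV f" "xs \<longlonglongrightarrow> x"
  shows "(\<lambda>k. f (xs k)) \<longlonglongrightarrow> f x"
  by (rule continuous_on_tendsto_compose[OF assms(1) assms(2)]) auto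

lemma C1_cont: "C1 f \<Longrightarrow> continuous_on UNIV f"
  unfolding C1_def by (metis differentiable_imp_continuous_on differentiable_at_imp_differentiable_on)

lemma grad_nth: "grad f x $ j = partial j f x"
  unfolding grad_def by (rule vec_lambda_beta)

lemma C1_pgrad_cont:
  assumes "C1 f"
  shows "continuous_on UNIV (pgrad blk \<nu> f)"
proof -
  have c: "continuous_on UNIV (\<lambda>x. grad f x $ j)" for j
    using assms unfolding C1_def continuous_on_def by (auto intro: tendsto_vec_nth)
  have e: "pgrad blk \<nu> f = (\<lambda>x. \<chi> j. if blk j = \<nu> then grad f x $ j else 0)"
    unfolding pgrad_def grad_nth by simp
  show ?thesis unfolding e
  proof (rule continuous_on_vec_lambda)
    fix j
    show "continuous_on UNIV (\<lambda>x. if blk j = \<nu> then grad f x $ j else 0)"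
      using c[of j] by (cases "blk j = \<nu>") (simp_all add: continuous_on_const)
  qed
qed

theorem theorem2p6:
  fixes blk :: "'n::finite \<Rightarrow> 'p::finite"
    and \<theta> :: "'p \<Rightarrow> real^'n \<Rightarrow> real"
    and r :: "'p \<Rightarrow> nat"
    and c :: "'p \<Rightarrow> nat \<Rightarrow> real^'n \<Rightarrow> real"
    and xs :: "nat \<Rightarrow> real^'n" and xbar :: "real^'n"
    and lam :: "nat \<Rightarrow> 'p \<Rightarrow> nat \<Rightarrow> real"
  assumes C1_theta: "\<And>\<nu>. C1 (\<theta> \<nu>)"
    and C1_c: "\<And>\<nu> i. i < r \<nu> \<Longrightarrow> C1 (c \<nu> i)"
    and conv: "xs \<longlonglongrightarrow> xbar"
    and stat: "\<And>\<nu>. (\<lambda>k. pgrad blk \<nu> (\<theta> \<nu>) (xs k)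
                   + (\<Sum>i<r \<nu>. lam k \<nu> i *\<^sub>R pgrad blk \<nu> (c \<nu> i) (xs k))) \<longlonglongrightarrow> 0"
    and compl: "\<And>\<nu> i. i < r \<nu> \<Longrightarrow> (\<lambda>k. min (- c \<nu> i (xs k)) (lam k \<nu> i)) \<longlonglongrightarrow> 0"
    and cpld: "GNEP_CPLD blk r c xbar"
  shows "\<exists>lbar. is_KKT blk \<theta> r c xbar lbar"
proof -
  have "\<forall>\<nu>. \<exists>l. pgrad blk \<nu> (\<theta> \<nu>) xbar + (\<Sum>i<r \<nu>. l i *\<^sub>R pgrad blk \<nu> (c \<nu> i) xbar) = 0
      \<and> (\<forall>i<r \<nu>. min (- c \<nu> i xbar) (l i) = 0)"
  proof
    fix \<nu>
    have cp: "CPLD_player blk r c \<nu> xbar" and le: "\<forall>i<r \<nu>. c \<nu> i xbar \<le> 0"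
      using cpld unfolding GNEP_CPLD_def by auto
    show "\<exists>l. pgrad blk \<nu> (\<theta> \<nu>) xbar + (\<Sum>i<r \<nu>. l i *\<^sub>R pgrad blk \<nu> (c \<nu> i) xbar) = 0
      \<and> (\<forall>i<r \<nu>. min (- c \<nu> i xbar) (l i) = 0)"
    proof (rule player[where lam = "\<lambda>k i. lam k \<nu> i"])
      show "xs \<longlonglongrightarrow> xbar" by (rule conv)
      show "(\<lambda>k. pgrad blk \<nu> (\<theta> \<nu>) (xs k)) \<longlonglongrightarrow> pgrad blk \<nu> (\<theta> \<nu>) xbar"
        by (rule seq_cont[OF C1_pgrad_cont[OF C1_theta] conv])
      show "(\<lambda>k. pgrad blk \<nu> (c \<nu> i) (xs k)) \<longlonglongrightarrow> pgrad blk \<nu> (c \<nu> i) xbar" if "i < r \<nu>" for i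
        by (rule seq_cont[OF C1_pgrad_cont[OF C1_c[OF that]] conv])
      show "(\<lambda>k. c \<nu> i (xs k)) \<longlonglongrightarrow> c \<nu> i xbar" if "i < r \<nu>" for i
        by (rule seq_cont[OF C1_cont[OF C1_c[OF that]] conv])
      show "c \<nu> i xbar \<le> 0" if "i < r \<nu>" for i using le that by blast
      show "(\<lambda>k. pgrad blk \<nu> (\<theta> \<nu>) (xs k) + (\<Sum>i<r \<nu>. lam k \<nu> i *\<^sub>R pgrad blk \<nu> (c \<nu> i) (xs k))) \<longlonglongrightarrow> 0"
        by (rule stat)
      show "(\<lambda>k. min (- c \<nu> i (xs k)) (lam k \<nu> i)) \<longlonglongrightarrow> 0" if "i < r \<nu>" for i
        by (rule compl[OF that])
      show "\<forall>I. I \<subseteq> {i. i < r \<nu> \<and> c \<nu> i xbar = 0} \<longrightarrow> pos_lin_dep I (\<lambda>i. pgrad blk \<nu> (c \<nu> i) xbar) \<longrightarrow>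
                 (\<exists>U. open U \<and> xbar \<in> U \<and> (\<forall>y\<in>U. lin_dep_fam I (\<lambda>i. pgrad blk \<nu> (c \<nu> i) y)))"
        using cp unfolding CPLD_player_def by blast
    qed
  qed
  then obtain L where L: "\<forall>\<nu>. pgrad blk \<nu> (\<theta> \<nu>) xbar + (\<Sum>i<r \<nu>. L \<nu> i *\<^sub>R pgrad blk \<nu> (c \<nu> i) xbar) = 0
      \<and> (\<forall>i<r \<nu>. min (- c \<nu> i xbar) (L \<nu> i) = 0)"
    by (rule choice[THEN exE]) blast
  show ?thesis unfolding is_KKT_def using L by blast
qed

end
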